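(* For every $n\ge0$ there are numbers $C_n^A$, indexed by the subsets $A\subseteq\{a_1,\dots,a_k\}$, with $0<C_n^A<1$ for all $A$ and $\sum_A C_n^A=1$, such that for all $x,y$ $$L_n(x,y)=\sum_{A\subseteq\{a_1,\dots,a_k\}} C_n^A\Big[\prod_{a_i\in A}(x-a_i)(y-a_i)\Big]K^A_{n-|A|}(x,y),$$ where $|A|$ is the cardinality of $A$ and $K_m^A\equiv0$ for $m<0$.
   Context: Let $\mu$ be a positive Borel measure on $\mathbb R$ with infinitely many points of increase and all moments finite. Let $a_1,\dots,a_k\in\mathbb R$ be distinct with $\mu(\{a_i\})=0$, $M_i>0$, $\nu=\mu+\sum_{i=1}^kM_i\delta_{a_i}$. $L_n(x,y)=\sum_{j=0}^nP_j(x)P_j(y)$ where $(P_j)$ are the orthonormal polynomials (positive leading coefficients) for $\nu$. For $A\subseteq\{a_1,\dots,a_k\}$, $d\mu^A(x)=\prod_{a_i\in A}(x-a_i)^2\,d\mu(x)$ (so $\mu^\emptyset=\mu$), and $K_m^A(x,y)$ is the $m$-th kernel $\sum_{j=0}^m q_j(x)q_j(y)$ for the orthonormal polynomials $(q_j)$ of $\mu^A$. *)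

theory Defs
  imports "HOL-Analysis.Analysis" "HOL-Computational_Algebra.Polynomial"
begin

definition point_of_increase :: "real measure \<Rightarrow> real \<Rightarrow> bool" where
  "point_of_increase \<mu> x \<longleftrightarrow> (\<forall>e>0. emeasure \<mu> {x - e<..<x + e} > 0)"

definition add_masses :: "real measure \<Rightarrow> real set \<Rightarrow> (real \<Rightarrow> real) \<Rightarrow> real measure" where
  "add_masses \<mu> S M = measure_of (space \<mu>) (sets \<mu>)
     (\<lambda>B. emeasure \<mu> B + (\<Sum>a\<in>S. ennreal (M a) * indicator B a))"

definition mod_measure :: "real measure \<Rightarrow> real set \<Rightarrow> real measure" where
  "mod_measure \<mu> A = density \<mu> (\<lambda>x. ennreal (\<Prod>a\<in>A. (x - a)^2))"

definition is_orthonormal_polys :: "real measure \<Rightarrow> (nat \<Rightarrow> real poly) \<Rightarrow> bool" where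
  "is_orthonormal_polys \<nu> P \<longleftrightarrow>
     (\<forall>j. degree (P j) = j \<and> lead_coeff (P j) > 0) \<and>
     (\<forall>i j. integrable \<nu> (\<lambda>x. poly (P i) x * poly (P j) x) \<and>
            integral\<^sup>L \<nu> (\<lambda>x. poly (P i) x * poly (P j) x) = (if i = j then 1 else 0))"

definition orthonormal_polys :: "real measure \<Rightarrow> nat \<Rightarrow> real poly" where
  "orthonormal_polys \<nu> = (SOME P. is_orthonormal_polys \<nu> P)"

definition kernel :: "real measure \<Rightarrow> int \<Rightarrow> real \<Rightarrow> real \<Rightarrow> real" where
  "kernel \<nu> m x y = (if m < 0 then 0 else
     (\<Sum>j\<le>nat m. poly (orthonormal_polys \<nu> j) x * poly (orthonormal_polys \<nu> j) y))"

end

theory Submission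
  imports Defs
begin


definition lin :: "(real poly \<Rightarrow> real) \<Rightarrow> bool" where
  "lin L \<longleftrightarrow> (\<forall>p q. L (p + q) = L p + L q) \<and> (\<forall>c p. L (smult c p) = c * L p)"

definition pd :: "(real poly \<Rightarrow> real) \<Rightarrow> bool" where
  "pd L \<longleftrightarrow> lin L \<and> (\<forall>p. p \<noteq> 0 \<longrightarrow> L (p * p) > 0)"

lemma lin_add: "lin L \<Longrightarrow> L (p + q) = L p + L q" by (simp add: lin_def)
lemma lin_smult: "lin L \<Longrightarrow> L (smult c p) = c * L p" by (simp add: lin_def)
lemma lin_zero: "lin L \<Longrightarrow> L 0 = 0" using lin_smult[of L 0 0] by simp
lemma lin_uminus: "lin L \<Longrightarrow> L (- p) = - L p" using lin_smult[of L "-1" p] by simp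
lemma lin_diff: "lin L \<Longrightarrow> L (p - q) = L p - L q"
  using lin_add[of L p "-q"] lin_uminus[of L q] by simp
lemma lin_sum: "lin L \<Longrightarrow> L (\<Sum>i\<in>I. f i) = (\<Sum>i\<in>I. L (f i))"
  by (induction I rule: infinite_finite_induct) (auto simp: lin_zero lin_add)
lemma pd_lin: "pd L \<Longrightarrow> lin L" by (simp add: pd_def)
lemma pd_pos: "pd L \<Longrightarrow> p \<noteq> 0 \<Longrightarrow> L (p * p) > 0" by (simp add: pd_def)

definition repr :: "(real poly \<Rightarrow> real) \<Rightarrow> nat \<Rightarrow> real \<Rightarrow> real poly \<Rightarrow> bool" where
  "repr L n x f \<longleftrightarrow> degree f \<le> n \<and> (\<forall>q. degree q \<le> n \<longrightarrow> L (f * q) = poly q x)"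

lemma pd_orth_zero:
  assumes "pd L" "degree d \<le> n" "\<And>q. degree q \<le> n \<Longrightarrow> L (d * q) = 0"
  shows "d = 0"
  using assms pd_pos[of L d] by force

lemma repr_unique:
  assumes L: "pd L" and f: "repr L n x f" and g: "repr L n x g"
  shows "f = g"
proof -
  have "f - g = 0"
  proof (rule pd_orth_zero[OF L])
    show "degree (f - g) \<le> n" using f g unfolding repr_def by (meson degree_diff_le)
    fix q :: "real poly" assume "degree q \<le> n"
    then show "L ((f - g) * q) = 0" using f g pd_lin[OF L]
      by (simp add: repr_def left_diff_distrib lin_diff)
  qed
  then show ?thesis by simp
qed

definition ON :: "(real poly \<Rightarrow> real) \<Rightarrow> (nat \<Rightarrow> real poly) \<Rightarrow> bool" where
  "ON L P \<longleftrightarrow> (\<forall>j. degree (P j) = j \<and> lead_coeff (P j) > 0) \<and>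
     (\<forall>i j. L (P i * P j) = (if i = j then 1 else 0))"

lemma ON_zero:
  assumes L: "lin L" and P: "ON L P"
  shows "degree r \<le> n \<Longrightarrow> (\<And>j. j \<le> n \<Longrightarrow> L (r * P j) = 0) \<Longrightarrow> r = 0"
proof (induction n arbitrary: r)
  case 0
  have dP: "degree (P 0) = 0" "lead_coeff (P 0) > 0" using P unfolding ON_def by blast+
  define c where "c = coeff r 0 / coeff (P 0) 0"
  have "r = smult c (P 0)"
  proof (rule poly_eqI)
    fix k show "coeff r k = coeff (smult c (P 0)) k"
    proof (cases k)
      case 0 then show ?thesis using dP by (simp add: c_def)
    next
      case (Suc m) then show ?thesis using 0(1) dP by (simp add: coeff_eq_0)
    qed
  qed
  then have "L (r * P 0) = c" using P L by (simp add: ON_def lin_smult)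
  with 0(2)[of 0] \<open>r = smult c (P 0)\<close> show ?case by simp
next
  case (Suc n)
  have dP: "degree (P (Suc n)) = Suc n" "lead_coeff (P (Suc n)) > 0" using P unfolding ON_def by blast+
  define c where "c = coeff r (Suc n) / lead_coeff (P (Suc n))"
  define r' where "r' = r - smult c (P (Suc n))"
  have "degree r' \<le> n"
  proof -
    have "degree r' \<le> Suc n" unfolding r'_def using Suc.prems dP
      by (metis degree_diff_le degree_smult_le order.trans)
    moreover have "coeff r' (Suc n) = 0" unfolding r'_def c_def using dP by simp
    ultimately show ?thesis
    proof (rule_tac ccontr)
      assume "degree r' \<le> Suc n" "coeff r' (Suc n) = 0" "\<not> degree r' \<le> n"
      then have "degree r' = Suc n" by linarith
      with \<open>coeff r' (Suc n) = 0\<close> have "r' = 0" using leading_coeff_0_iff by metis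
      with \<open>degree r' = Suc n\<close> show False by simp
    qed
  qed
  moreover have "L (r' * P j) = 0" if "j \<le> n" for j
  proof -
    have "L (r' * P j) = L (r * P j) - c * L (P (Suc n) * P j)"
      unfolding r'_def using L by (simp add: left_diff_distrib lin_diff lin_smult)
    also have "\<dots> = 0" using that Suc.prems(2)[of j] P by (simp add: ON_def)
    finally show ?thesis .
  qed
  ultimately have "r' = 0" using Suc.IH by blast
  then have rr: "r = smult c (P (Suc n))" unfolding r'_def by simp
  have "L (r * P (Suc n)) = c" using P L rr by (simp add: ON_def lin_smult)
  with Suc.prems(2)[of "Suc n"] rr show ?case by simp
qed

definition kp :: "(nat \<Rightarrow> real poly) \<Rightarrow> nat \<Rightarrow> real \<Rightarrow> real poly" where
  "kp P n x = (\<Sum>j\<le>n. smult (poly (P j) x) (P j))"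

lemma ON_repr:
  assumes L: "lin L" and P: "ON L P"
  shows "repr L n x (kp P n x)"
  unfolding repr_def
proof safe
  show "degree (kp P n x) \<le> n" unfolding kp_def
    using P by (intro degree_sum_le) (auto simp: ON_def intro: order.trans[OF degree_smult_le])
  fix q :: "real poly" assume q: "degree q \<le> n"
  define r where "r = q - (\<Sum>j\<le>n. smult (L (q * P j)) (P j))"
  have "r = 0"
  proof (rule ON_zero[OF L P])
    show "degree r \<le> n" unfolding r_def using q P
      by (intro degree_diff_le degree_sum_le) (auto simp: ON_def intro: order.trans[OF degree_smult_le])
    fix i assume i: "i \<le> n"
    have "L (r * P i) = L (q * P i) - (\<Sum>j\<le>n. L (q * P j) * L (P j * P i))"
      unfolding r_def using L by (simp add: left_diff_distrib lin_diff sum_distrib_right lin_sum lin_smult)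
    also have "(\<Sum>j\<le>n. L (q * P j) * L (P j * P i)) = (\<Sum>j\<in>{i}. L (q * P j) * L (P j * P i))"
      using P i by (intro sum.mono_neutral_right) (auto simp: ON_def)
    also have "\<dots> = L (q * P i)" using P by (simp add: ON_def)
    finally show "L (r * P i) = 0" by simp
  qed
  then have qe: "q = (\<Sum>j\<le>n. smult (L (q * P j)) (P j))" unfolding r_def by simp
  have "L (kp P n x * q) = (\<Sum>j\<le>n. poly (P j) x * L (P j * q))"
    unfolding kp_def using L by (simp add: sum_distrib_right lin_sum lin_smult)
  also have "\<dots> = poly q x"
    by (subst (2) qe) (simp add: poly_sum mult.commute)
  finally show "L (kp P n x * q) = poly q x" .
qed



function gsp :: "(real poly \<Rightarrow> real) \<Rightarrow> nat \<Rightarrow> real poly" where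
  "gsp L n = (let Q = monom 1 n - (\<Sum>j<n. smult (L (monom 1 n * gsp L j)) (gsp L j))
              in smult (1 / sqrt (L (Q * Q))) Q)"
  by auto
termination by (relation "Wellfounded.measure snd") auto

declare gsp.simps[simp del]

lemma gsp_props:
  assumes L: "pd L"
  shows "degree (gsp L n) = n \<and> lead_coeff (gsp L n) > 0 \<and>
         (\<forall>j<n. L (gsp L n * gsp L j) = 0) \<and> L (gsp L n * gsp L n) = 1"
proof (induction n rule: less_induct)
  case (less n)
  have lin: "lin L" using L by (rule pd_lin)
  have orth: "L (gsp L j * gsp L i) = (if j = i then 1 else 0)" if "i < n" "j < n" for i j
  proof (cases "j < i")
    case True
    then have "L (gsp L i * gsp L j) = 0" using less.IH[of i] that by blast
    then show ?thesis using True by (simp add: mult.commute)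
  next
    case False
    then show ?thesis using less.IH[of j] that by (cases "i = j") auto
  qed
  define c where "c j = L (monom 1 n * gsp L j)" for j
  define Q where "Q = monom 1 n - (\<Sum>j<n. smult (c j) (gsp L j))"
  define s where "s = 1 / sqrt (L (Q * Q))"
  have g: "gsp L n = smult s Q"
    by (subst gsp.simps) (simp add: Let_def Q_def s_def c_def)
  have cs: "coeff (\<Sum>j<n. smult (c j) (gsp L j)) n = 0"
    using less.IH by (auto simp: coeff_sum intro!: sum.neutral coeff_eq_0)
  have dsum: "degree (\<Sum>j<n. smult (c j) (gsp L j)) \<le> n"
    using less.IH by (intro degree_sum_le) (auto intro: order.trans[OF degree_smult_le])
  have cQ: "coeff Q n = 1" unfolding Q_def using cs by (simp add: coeff_monom)
  have "degree Q \<le> n" unfolding Q_def using dsum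
    by (meson degree_diff_le degree_monom_le order.trans)
  moreover have "n \<le> degree Q" using cQ by (intro le_degree) simp
  ultimately have dQ: "degree Q = n" by simp
  have Q0: "Q \<noteq> 0" using cQ by auto
  have QQ: "L (Q * Q) > 0" using pd_pos[OF L Q0] .
  have s0: "s > 0" unfolding s_def using QQ by simp
  have "degree (gsp L n) = n" using g dQ s0 by simp
  moreover have "lead_coeff (gsp L n) > 0" using g dQ s0 cQ by simp
  moreover have "L (gsp L n * gsp L i) = 0" if i: "i < n" for i
  proof -
    have "L (Q * gsp L i) = c i - (\<Sum>j<n. c j * L (gsp L j * gsp L i))"
      unfolding Q_def c_def using lin
      by (simp add: left_diff_distrib lin_diff sum_distrib_right lin_sum lin_smult mult.assoc)
    also have "(\<Sum>j<n. c j * L (gsp L j * gsp L i)) = (\<Sum>j\<in>{i}. c j * L (gsp L j * gsp L i))"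
      using i orth by (intro sum.mono_neutral_right) auto
    also have "\<dots> = c i" using orth[OF i i] by simp
    finally show ?thesis using g lin by (simp add: lin_smult)
  qed
  moreover have "L (gsp L n * gsp L n) = 1"
  proof -
    have "L (gsp L n * gsp L n) = s * s * L (Q * Q)" using g lin by (simp add: lin_smult mult_ac)
    also have "\<dots> = 1" unfolding s_def using QQ
      by (simp add: field_simps)
    finally show ?thesis .
  qed
  ultimately show ?case by blast
qed

lemma gsp_ON: "pd L \<Longrightarrow> ON L (gsp L)"
proof -
  assume L: "pd L"
  have "L (gsp L i * gsp L j) = (if i = j then 1 else 0)" for i j
  proof (cases i j rule: linorder_cases)
    case less
    then have "L (gsp L j * gsp L i) = 0" using gsp_props[OF L, of j] by blast
    then show ?thesis using less by (simp add: mult.commute)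
  qed (use gsp_props[OF L] in auto)
  then show ?thesis using gsp_props[OF L] unfolding ON_def by blast
qed

definition akp :: "(real poly \<Rightarrow> real) \<Rightarrow> int \<Rightarrow> real \<Rightarrow> real poly" where
  "akp L m x = (if m < 0 then 0 else kp (gsp L) (nat m) x)"

lemma akp_repr: "pd L \<Longrightarrow> 0 \<le> m \<Longrightarrow> repr L (nat m) x (akp L m x)"
  unfolding akp_def using ON_repr[OF pd_lin gsp_ON] by simp

lemma akp_neg: "m < 0 \<Longrightarrow> akp L m x = 0" by (simp add: akp_def)

lemma ON_kp_eq: "pd L \<Longrightarrow> ON L P \<Longrightarrow> kp P n x = akp L (int n) x"
  using repr_unique[OF _ ON_repr[OF pd_lin] akp_repr[of L "int n"]] by simp



definition addpt :: "(real poly \<Rightarrow> real) \<Rightarrow> real \<Rightarrow> real \<Rightarrow> real poly \<Rightarrow> real" where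
  "addpt L b M = (\<lambda>p. L p + M * poly p b)"
definition modf :: "(real poly \<Rightarrow> real) \<Rightarrow> real set \<Rightarrow> real poly \<Rightarrow> real" where
  "modf L A = (\<lambda>p. L (p * (\<Prod>a\<in>A. [:-a,1:]^2)))"
definition addm :: "(real poly \<Rightarrow> real) \<Rightarrow> real set \<Rightarrow> (real \<Rightarrow> real) \<Rightarrow> real poly \<Rightarrow> real" where
  "addm L S M = (\<lambda>p. L p + (\<Sum>a\<in>S. M a * poly p a))"

lemma pd_addpt:
  assumes L: "pd L" and M: "M \<ge> 0" shows "pd (addpt L b M)"
proof -
  have lin: "lin L" using L by (rule pd_lin)
  have "lin (addpt L b M)" using lin unfolding lin_def addpt_def by (simp add: algebra_simps)
  moreover have "addpt L b M (p * p) > 0" if "p \<noteq> 0" for p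
    using pd_pos[OF L that] M unfolding addpt_def by (simp add: add_pos_nonneg)
  ultimately show ?thesis unfolding pd_def by blast
qed

lemma pd_addm:
  assumes L: "pd L" and M: "\<And>a. a \<in> S \<Longrightarrow> M a \<ge> 0" shows "pd (addm L S M)"
proof -
  have lin: "lin L" using L by (rule pd_lin)
  have "lin (addm L S M)" using lin unfolding lin_def addm_def
    by (simp add: algebra_simps sum.distrib sum_distrib_left)
  moreover have "addm L S M (p * p) > 0" if "p \<noteq> 0" for p
  proof -
    have "(\<Sum>a\<in>S. M a * poly (p * p) a) \<ge> 0" using M by (intro sum_nonneg) simp
    then show ?thesis using pd_pos[OF L that] unfolding addm_def by simp
  qed
  ultimately show ?thesis unfolding pd_def by blast
qed

lemma pd_modf:
  assumes L: "pd L" and A: "finite A" shows "pd (modf L A)"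
proof -
  have lin: "lin L" using L by (rule pd_lin)
  have "lin (modf L A)" using lin unfolding lin_def modf_def by (simp add: algebra_simps)
  moreover have "modf L A (p * p) > 0" if "p \<noteq> 0" for p
  proof -
    define r where "r = (\<Prod>a\<in>A. [:-a,1:])"
    have r0: "r \<noteq> 0" unfolding r_def using A by simp
    have "(\<Prod>a\<in>A. [:-a,1:]^2) = r * r" unfolding r_def by (simp only: power2_eq_square prod.distrib)
    then have "modf L A (p * p) = L ((p * r) * (p * r))" unfolding modf_def by (simp add: mult_ac)
    then show ?thesis using pd_pos[OF L] that r0 by simp
  qed
  ultimately show ?thesis unfolding pd_def by blast
qed

lemma one_mass:
  assumes L: "pd L" and M: "M > 0"
  shows "\<exists>c. 0 < c \<and> c < 1 \<and> (\<forall>x. akp (addpt L b M) n x =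
           smult (1 - c) (akp L n x) + smult (c * (x - b)) ([:-b,1:] * akp (modf L {b}) (n - 1) x))"
proof (cases "n < 0")
  case True
  then show ?thesis by (intro exI[of _ "1/2"]) (simp add: akp_neg)
next
  case False
  define N where "N = nat n"
  have lin: "lin L" using L by (rule pd_lin)
  have L': "pd (addpt L b M)" using pd_addpt[OF L] M by simp
  have Lb: "pd (modf L {b})" using pd_modf[OF L] by simp
  define k where "k x = akp L n x" for x
  have rk: "repr L N x (k x)" for x unfolding k_def N_def using akp_repr[OF L] False by simp
  define K where "K = poly (k b) b"
  have "\<forall>q. degree q \<le> N \<longrightarrow> L (k b * q) = poly q b" using rk[of b] unfolding repr_def by simp
  then have "L (k b * 1) = poly 1 b" by (erule_tac x=1 in allE) simp
  then have "L (k b) = 1" by simp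
  then have kb0: "k b \<noteq> 0" using lin_zero[OF lin] by auto
  have "L (k b * k b) = K" using rk[of b] unfolding repr_def K_def by simp
  then have K0: "K > 0" using pd_pos[OF L kb0] by simp
  define c where "c = M * K / (1 + M * K)"
  have MK: "0 < M * K" using K0 M by simp
  have D: "1 + M * K \<noteq> 0" "1 + K * M \<noteq> 0" using MK by (auto simp: mult.commute)
  have c0: "0 < c" "c < 1" unfolding c_def using MK by (auto intro: divide_pos_pos simp: divide_less_eq)
  have main: "akp (addpt L b M) n x =
           smult (1 - c) (k x) + smult (c * (x - b)) ([:-b,1:] * akp (modf L {b}) (n - 1) x)" for x
  proof -
    define kxb where "kxb = poly (k x) b"
    define \<alpha> where "\<alpha> = M * kxb / (1 + M * K)"
    define F where "F = k x - smult \<alpha> (k b)"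
    have rF: "repr (addpt L b M) N x F"
      unfolding repr_def
    proof safe
      show "degree F \<le> N" unfolding F_def using rk[of x] rk[of b] unfolding repr_def
        by (meson degree_diff_le degree_smult_le order.trans)
      fix q :: "real poly" assume q: "degree q \<le> N"
      have 1: "L (F * q) = poly q x - \<alpha> * poly q b"
        unfolding F_def using rk[of x] rk[of b] q lin unfolding repr_def
        by (simp add: left_diff_distrib lin_diff lin_smult)
      have 2: "poly F b = kxb - \<alpha> * K" unfolding F_def kxb_def K_def by simp
      have 3: "M * (kxb - \<alpha> * K) = \<alpha>" unfolding \<alpha>_def using K0 M D by (simp add: field_simps)
      have "addpt L b M (F * q) = L (F * q) + (M * poly F b) * poly q b" by (simp add: addpt_def)
      also have "\<dots> = poly q x - \<alpha> * poly q b + (M * (kxb - \<alpha> * K)) * poly q b" using 1 2 by simp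
      also have "\<dots> = poly q x" using 3 by simp
      finally show "addpt L b M (F * q) = poly q x" .
    qed
    have eqF: "akp (addpt L b M) n x = F"
    proof -
      have "repr (addpt L b M) N x (akp (addpt L b M) n x)"
        using akp_repr[OF L', of n x] False N_def by simp
      then show ?thesis using repr_unique[OF L' _ rF] by blast
    qed
    define H where "H = k x - smult (kxb / K) (k b)"
    have "poly H b = kxb - kxb / K * K" unfolding H_def kxb_def K_def by simp
    then have Hb: "poly H b = 0" using K0 by simp
    define h where "h = synthetic_div H b"
    have Hh: "H = [:-b,1:] * h" unfolding h_def using synthetic_div_correct'[of b H] Hb by simp
    have dH: "degree H \<le> N" unfolding H_def using rk[of x] rk[of b] unfolding repr_def
      by (meson degree_diff_le degree_smult_le order.trans)
    have hg: "h = smult (x - b) (akp (modf L {b}) (n - 1) x)"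
    proof (cases "N = 0")
      case True
      then have "degree H = 0" using dH by simp
      then obtain a0 where "H = [:a0:]" by (rule degree_eq_zeroE)
      then have "H = 0" using Hb by simp
      then have "h = 0" unfolding h_def by simp
      then show ?thesis using True False N_def by (simp add: akp_neg)
    next
      case N1: False
      define g where "g = akp (modf L {b}) (n - 1) x"
      have rg: "repr (modf L {b}) (N - 1) x g" unfolding g_def
        using akp_repr[OF Lb, of "n - 1" x] N1 False N_def by (simp add: nat_diff_distrib)
      have "h - smult (x - b) g = 0"
      proof (rule pd_orth_zero[OF Lb])
        show "degree (h - smult (x - b) g) \<le> N - 1"
        proof -
          have "degree h \<le> N - 1" unfolding h_def degree_synthetic_div using dH by simp
          moreover have "degree (smult (x - b) g) \<le> N - 1"
            using rg unfolding repr_def by (meson degree_smult_le order.trans)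
          ultimately show ?thesis by (meson degree_diff_le)
        qed
        fix s :: "real poly" assume s: "degree s \<le> N - 1"
        define q where "q = [:-b,1:] * s"
        have "degree q \<le> degree [:-b,1:] + degree s" unfolding q_def by (rule degree_mult_le)
        then have dq: "degree q \<le> N" using s N1 by simp
        have pb: "(\<Prod>a\<in>{b}. [:-a,1:]^2) = [:-b,1:] * [:-b,1:]" by (simp add: power2_eq_square)
        have "modf L {b} (h * s) = L (H * q)" unfolding modf_def pb Hh q_def by (simp only: mult_ac)
        also have "\<dots> = poly q x - kxb / K * poly q b"
          unfolding H_def using rk[of x] rk[of b] dq lin unfolding repr_def
          by (simp add: left_diff_distrib lin_diff lin_smult)
        also have "\<dots> = (x - b) * poly s x" unfolding q_def by (simp add: algebra_simps)
        finally have 1: "modf L {b} (h * s) = (x - b) * poly s x" .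
        have 2: "modf L {b} (g * s) = poly s x" using rg s unfolding repr_def by simp
        show "modf L {b} ((h - smult (x - b) g) * s) = 0"
          using 1 2 pd_lin[OF Lb] by (simp add: left_diff_distrib lin_diff lin_smult)
      qed
      then show ?thesis unfolding g_def by simp
    qed
    have "F = smult (1 - c) (k x) + smult c H"
    proof -
      have ac: "\<alpha> = c * (kxb / K)" unfolding \<alpha>_def c_def using K0 D by (simp add: field_simps)
      show ?thesis unfolding F_def H_def ac by (intro poly_eqI) (simp add: algebra_simps)
    qed
    also have "\<dots> = smult (1 - c) (k x) + smult (c * (x - b)) ([:-b,1:] * akp (modf L {b}) (n - 1) x)"
      unfolding Hh hg by simp
    finally show ?thesis using eqF by simp
  qed
  show ?thesis using c0 main unfolding k_def by blast
qed



lemma sum_Pow_insert: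
  assumes "finite S" "b \<notin> S"
  shows "(\<Sum>A\<in>Pow (insert b S). g A) = (\<Sum>A\<in>Pow S. g A) + (\<Sum>A\<in>Pow S. g (insert b A))"
proof -
  have inj: "inj_on (insert b) (Pow S)"
  proof (rule inj_onI)
    fix x y assume xy: "x \<in> Pow S" "y \<in> Pow S" "insert b x = insert b y"
    then have "b \<notin> x" "b \<notin> y" using assms(2) by auto
    with xy(3) show "x = y" by (metis Diff_insert_absorb)
  qed
  have disj: "Pow S \<inter> insert b ` Pow S = {}" using assms(2) by blast
  have "(\<Sum>A\<in>Pow (insert b S). g A) = (\<Sum>A\<in>Pow S \<union> insert b ` Pow S. g A)"
    by (simp add: Pow_insert)
  also have "\<dots> = (\<Sum>A\<in>Pow S. g A) + (\<Sum>A\<in>insert b ` Pow S. g A)"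
    using assms(1) disj by (intro sum.union_disjoint) auto
  also have "(\<Sum>A\<in>insert b ` Pow S. g A) = (\<Sum>A\<in>Pow S. g (insert b A))"
    using inj by (simp add: sum.reindex)
  finally show ?thesis .
qed

lemma abstract_main:
  assumes "finite S"
  shows "pd L \<Longrightarrow> (\<forall>a\<in>S. M a > 0) \<Longrightarrow> \<exists>C. (\<forall>A\<in>Pow S. C A > 0) \<and> (\<Sum>A\<in>Pow S. C A) = 1 \<and>
     (\<forall>x y. poly (akp (addm L S M) n x) y =
        (\<Sum>A\<in>Pow S. C A * (\<Prod>a\<in>A. (x - a) * (y - a)) * poly (akp (modf L A) (n - int (card A)) x) y))"
  using assms
proof (induction S arbitrary: L M n rule: finite_induct)
  case empty
  have 1: "addm L {} M = L" by (simp add: addm_def)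
  have 2: "modf L {} = L" by (simp add: modf_def)
  show ?case by (intro exI[of _ "\<lambda>_. 1"]) (simp add: 1 2)
next
  case (insert b S)
  define L1 where "L1 = addm L S M"
  have pL1: "pd L1" unfolding L1_def using pd_addm[OF insert.prems(1)] insert.prems(2)
    by (simp add: less_imp_le)
  have e1: "addm L (insert b S) M = addpt L1 b (M b)"
    unfolding L1_def addm_def addpt_def using insert.hyps by (simp add: fun_eq_iff algebra_simps)
  obtain c where c: "0 < c" "c < 1" and cK: "\<And>x. akp (addpt L1 b (M b)) n x =
           smult (1 - c) (akp L1 n x) + smult (c * (x - b)) ([:-b,1:] * akp (modf L1 {b}) (n - 1) x)"
    using one_mass[OF pL1, of "M b" b n] insert.prems(2) by auto
  obtain C1 where C1: "\<forall>A\<in>Pow S. C1 A > 0" "(\<Sum>A\<in>Pow S. C1 A) = 1"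
    "\<And>x y. poly (akp L1 n x) y =
        (\<Sum>A\<in>Pow S. C1 A * (\<Prod>a\<in>A. (x - a) * (y - a)) * poly (akp (modf L A) (n - int (card A)) x) y)"
    using insert.IH[OF insert.prems(1), of M n] insert.prems(2) unfolding L1_def by auto
  define Lb where "Lb = modf L {b}"
  define M' where "M' a = M a * (a - b)^2" for a
  have pLb: "pd Lb" unfolding Lb_def using pd_modf[OF insert.prems(1)] by simp
  have M'pos: "\<forall>a\<in>S. M' a > 0"
  proof
    fix a assume a: "a \<in> S"
    then have "a \<noteq> b" using insert.hyps(2) by auto
    then have "(a - b)^2 > 0" by simp
    then show "M' a > 0" unfolding M'_def using insert.prems(2) a by simp
  qed
  obtain C2 where C2: "\<forall>A\<in>Pow S. C2 A > 0" "(\<Sum>A\<in>Pow S. C2 A) = 1"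
    "\<And>x y. poly (akp (addm Lb S M') (n - 1) x) y =
        (\<Sum>A\<in>Pow S. C2 A * (\<Prod>a\<in>A. (x - a) * (y - a)) * poly (akp (modf Lb A) (n - 1 - int (card A)) x) y)"
    using insert.IH[OF pLb M'pos, of "n - 1"] by auto
  have e2: "modf L1 {b} = addm Lb S M'"
  proof (rule ext)
    fix p :: "real poly"
    have "(\<Sum>a\<in>S. M a * poly (p * [:-b,1:]^2) a) = (\<Sum>a\<in>S. M' a * poly p a)"
      unfolding M'_def by (intro sum.cong) (auto simp: algebra_simps power2_eq_square)
    then show "modf L1 {b} p = addm Lb S M' p"
      unfolding modf_def L1_def addm_def Lb_def by simp
  qed
  have e3: "modf Lb A = modf L (insert b A)" if "A \<in> Pow S" for A
  proof -
    have "finite A" "b \<notin> A" using that insert.hyps finite_subset by auto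
    then show ?thesis unfolding Lb_def modf_def by (simp add: fun_eq_iff mult_ac)
  qed
  define C where "C A = (if b \<in> A then c * C2 (A - {b}) else (1 - c) * C1 A)" for A
  have Cs: "C A = (1 - c) * C1 A" "C (insert b A) = c * C2 A" if "A \<in> Pow S" for A
  proof -
    have nb: "b \<notin> A" using that insert.hyps(2) by auto
    show "C A = (1 - c) * C1 A" using nb unfolding C_def by simp
    show "C (insert b A) = c * C2 A" using nb unfolding C_def by (simp add: Diff_insert_absorb)
  qed
  have cardi: "card (insert b A) = Suc (card A)" if "A \<in> Pow S" for A
  proof -
    have "finite A" "b \<notin> A" using that insert.hyps finite_subset by auto
    then show ?thesis by simp
  qed
  have prodi: "(\<Prod>a\<in>insert b A. (x - a) * (y - a)) = (x - b) * (y - b) * (\<Prod>a\<in>A. (x - a) * (y - a))"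
    if "A \<in> Pow S" for A x y
  proof -
    have "finite A" "b \<notin> A" using that insert.hyps finite_subset by auto
    then show ?thesis by simp
  qed
  have pos: "\<forall>A\<in>Pow (insert b S). C A > 0"
  proof
    fix A assume A: "A \<in> Pow (insert b S)"
    show "C A > 0"
    proof (cases "b \<in> A")
      case True
      then have "A - {b} \<in> Pow S" using A by auto
      then show ?thesis using True C2(1) c unfolding C_def by auto
    next
      case False
      then have "A \<in> Pow S" using A by auto
      then show ?thesis using False C1(1) c unfolding C_def by auto
    qed
  qed
  have sum1: "(\<Sum>A\<in>Pow (insert b S). C A) = 1"
    using C1(2) C2(2) Cs
    by (simp add: sum_Pow_insert[OF insert.hyps] sum_distrib_left[symmetric])
  have ker: "poly (akp (addm L (insert b S) M) n x) y =
        (\<Sum>A\<in>Pow (insert b S). C A * (\<Prod>a\<in>A. (x - a) * (y - a)) * poly (akp (modf L A) (n - int (card A)) x) y)"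
    for x y
  proof -
    have "poly (akp (addm L (insert b S) M) n x) y =
       (1 - c) * poly (akp L1 n x) y + c * (x - b) * (y - b) * poly (akp (addm Lb S M') (n - 1) x) y"
      unfolding e1 cK e2 by (simp add: algebra_simps)
    also have "\<dots> = (\<Sum>A\<in>Pow S. C A * (\<Prod>a\<in>A. (x - a) * (y - a)) * poly (akp (modf L A) (n - int (card A)) x) y)
       + (\<Sum>A\<in>Pow S. C (insert b A) * (\<Prod>a\<in>insert b A. (x - a) * (y - a)) * poly (akp (modf L (insert b A)) (n - int (card (insert b A))) x) y)"
    proof -
      have el1: "(1 - c) * (C1 A * (\<Prod>a\<in>A. (x - a) * (y - a)) * poly (akp (modf L A) (n - int (card A)) x) y)
        = C A * (\<Prod>a\<in>A. (x - a) * (y - a)) * poly (akp (modf L A) (n - int (card A)) x) y"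
        if "A \<in> Pow S" for A using Cs[OF that] by simp
      have el2: "c * (x - b) * (y - b) * (C2 A * (\<Prod>a\<in>A. (x - a) * (y - a)) * poly (akp (modf Lb A) (n - 1 - int (card A)) x) y)
        = C (insert b A) * (\<Prod>a\<in>insert b A. (x - a) * (y - a)) * poly (akp (modf L (insert b A)) (n - int (card (insert b A))) x) y"
        if "A \<in> Pow S" for A
        by (simp only: Cs[OF that] prodi[OF that] cardi[OF that] e3[OF that]) (simp add: algebra_simps)
      show ?thesis
        unfolding C1(3) C2(3) sum_distrib_left
        using el1 el2 by (intro arg_cong2[where f = "(+)"] sum.cong refl) auto
    qed
    also have "\<dots> = (\<Sum>A\<in>Pow (insert b S). C A * (\<Prod>a\<in>A. (x - a) * (y - a)) * poly (akp (modf L A) (n - int (card A)) x) y)"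
      by (simp add: sum_Pow_insert[OF insert.hyps])
    finally show ?thesis .
  qed
  show ?case using pos sum1 ker by blast
qed



definition ifn :: "real measure \<Rightarrow> real poly \<Rightarrow> real" where
  "ifn \<nu> = (\<lambda>p. integral\<^sup>L \<nu> (\<lambda>x. poly p x))"

lemma ifn_mult: "ifn \<nu> (p * q) = integral\<^sup>L \<nu> (\<lambda>x. poly p x * poly q x)"
proof -
  have e: "(\<lambda>x. poly (p * q) x) = (\<lambda>x. poly p x * poly q x)" by (simp add: fun_eq_iff)
  show ?thesis unfolding ifn_def e by (rule refl)
qed

lemma int_mult: "integrable \<nu> (\<lambda>x. poly (p * q) x) = integrable \<nu> (\<lambda>x. poly p x * poly q x)"
proof -
  have "(\<lambda>x. poly (p * q) x) = (\<lambda>x. poly p x * poly q x)" by (simp add: fun_eq_iff)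
  then show ?thesis by simp
qed

lemma bridge:
  assumes int: "\<And>p. integrable \<nu> (\<lambda>x. poly p x)" and pdn: "pd (ifn \<nu>)"
  shows "kernel \<nu> m x y = poly (akp (ifn \<nu>) m x) y"
proof -
  have iso_ON: "ON (ifn \<nu>) P" if "is_orthonormal_polys \<nu> P" for P
  proof -
    have 1: "\<forall>j. degree (P j) = j \<and> lead_coeff (P j) > 0" using that unfolding is_orthonormal_polys_def by blast
    have 2: "\<forall>i j. ifn \<nu> (P i * P j) = (if i = j then 1 else 0)"
      using that unfolding is_orthonormal_polys_def ifn_mult by blast
    show ?thesis unfolding ON_def using 1 2 by blast
  qed
  have "is_orthonormal_polys \<nu> (gsp (ifn \<nu>))"
  proof -
    have 1: "\<forall>j. degree (gsp (ifn \<nu>) j) = j \<and> lead_coeff (gsp (ifn \<nu>) j) > 0"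
      using gsp_ON[OF pdn] unfolding ON_def by blast
    have 2: "\<forall>i j. integrable \<nu> (\<lambda>x. poly (gsp (ifn \<nu>) i) x * poly (gsp (ifn \<nu>) j) x)"
      using int unfolding int_mult[symmetric] by blast
    have 3: "\<forall>i j. integral\<^sup>L \<nu> (\<lambda>x. poly (gsp (ifn \<nu>) i) x * poly (gsp (ifn \<nu>) j) x) = (if i = j then 1 else 0)"
      using gsp_ON[OF pdn] unfolding ON_def ifn_mult by blast
    show ?thesis unfolding is_orthonormal_polys_def using 1 2 3 by blast
  qed
  then have "is_orthonormal_polys \<nu> (orthonormal_polys \<nu>)"
    unfolding orthonormal_polys_def by (rule someI[where P="is_orthonormal_polys \<nu>"])
  then have ON: "ON (ifn \<nu>) (orthonormal_polys \<nu>)" by (rule iso_ON)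
  show ?thesis
  proof (cases "m < 0")
    case True then show ?thesis by (simp add: kernel_def akp_neg)
  next
    case False
    have "kernel \<nu> m x y = poly (kp (orthonormal_polys \<nu>) (nat m) x) y"
      using False by (simp add: kernel_def kp_def poly_sum)
    also have "\<dots> = poly (akp (ifn \<nu>) (int (nat m)) x) y" using ON_kp_eq[OF pdn ON] by simp
    finally show ?thesis using False by simp
  qed
qed



lemma ifn_lin:
  assumes int: "\<And>p. integrable \<nu> (\<lambda>x. poly p x)"
  shows "lin (ifn \<nu>)"
  unfolding lin_def
proof safe
  fix p q :: "real poly"
  have e: "(\<lambda>x. poly (p + q) x) = (\<lambda>x. poly p x + poly q x)" by (simp add: fun_eq_iff)
  show "ifn \<nu> (p + q) = ifn \<nu> p + ifn \<nu> q"
    unfolding ifn_def e using int[of p] int[of q] by (rule Bochner_Integration.integral_add)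
next
  fix c :: real and p :: "real poly"
  have e: "(\<lambda>x. poly (smult c p) x) = (\<lambda>x. c * poly p x)" by (simp add: fun_eq_iff)
  show "ifn \<nu> (smult c p) = c * ifn \<nu> p"
    unfolding ifn_def e by simp
qed

lemma poly_integrable:
  fixes \<mu> :: "real measure"
  assumes moments: "\<And>k::nat. integrable \<mu> (\<lambda>x. x ^ k)"
  shows "integrable \<mu> (\<lambda>x. poly p x)"
proof -
  have e: "(\<lambda>x. poly p x) = (\<lambda>x. \<Sum>i\<le>degree p. coeff p i * x ^ i)" by (simp add: poly_altdef fun_eq_iff)
  show ?thesis unfolding e using moments by (intro Bochner_Integration.integrable_sum integrable_mult_right)
qed

lemma mu_pd:
  fixes \<mu> :: "real measure"
  assumes sets_mu: "sets \<mu> = sets borel"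
    and incr: "infinite {x. point_of_increase \<mu> x}"
    and moments: "\<And>k::nat. integrable \<mu> (\<lambda>x. x ^ k)"
  shows "pd (ifn \<mu>)"
proof -
  have sp: "space \<mu> = UNIV" using sets_eq_imp_space_eq[OF sets_mu] by simp
  have int: "integrable \<mu> (\<lambda>x. poly p x)" for p using poly_integrable[OF moments] .
  have "(\<lambda>x::real. x ^ 0) = indicator UNIV" by (simp add: fun_eq_iff)
  then have "integrable \<mu> (indicator UNIV :: real \<Rightarrow> real)" using moments[of 0] by simp
  then have fin: "emeasure \<mu> UNIV < \<infinity>" unfolding integrable_indicator_iff sp by simp
  have "ifn \<mu> (p * p) > 0" if p0: "p \<noteq> 0" for p
  proof -
    have "infinite ({x. point_of_increase \<mu> x} - {x. poly p x = 0})"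
      using Diff_infinite_finite[OF poly_roots_finite[OF p0] incr] .
    then obtain x0 where x0: "point_of_increase \<mu> x0" "poly p x0 \<noteq> 0"
      by (metis (mono_tags, lifting) DiffD1 DiffD2 finite.emptyI mem_Collect_eq ex_in_conv)
    define \<delta> where "\<delta> = \<bar>poly p x0\<bar> / 2"
    have d0: "\<delta> > 0" unfolding \<delta>_def using x0 by simp
    have "isCont (\<lambda>x. poly p x) x0" by (rule poly_isCont)
    then obtain e where e0: "e > 0" and e: "\<And>y. dist y x0 < e \<Longrightarrow> dist (poly p y) (poly p x0) < \<delta>"
      using d0 unfolding continuous_at_eps_delta by blast
    define I where "I = {x0 - e<..<x0 + e}"
    have I: "I \<in> sets \<mu>" unfolding I_def sets_mu by simp
    have Ifin: "emeasure \<mu> I < \<infinity>"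
      using fin emeasure_mono[of I UNIV \<mu>] sp by (metis I emeasure_space inf_top.right_neutral le_less_trans
          sets.top)
    have Ipos: "emeasure \<mu> I > 0" using x0(1) e0 unfolding point_of_increase_def I_def by blast
    have le: "\<delta> * \<delta> * indicator I y \<le> poly p y * poly p y" for y
    proof (cases "y \<in> I")
      case True
      then have "dist y x0 < e" unfolding I_def dist_real_def by auto
      then have "\<bar>poly p y - poly p x0\<bar> < \<delta>" using e dist_real_def by metis
      then have "\<bar>poly p y\<bar> \<ge> \<delta>" unfolding \<delta>_def by linarith
      then have "\<delta> * \<delta> \<le> \<bar>poly p y\<bar> * \<bar>poly p y\<bar>" using d0 by (intro mult_mono) auto
      then show ?thesis using True by (simp add: abs_mult[symmetric])
    qed simp
    have "integral\<^sup>L \<mu> (\<lambda>y. \<delta> * \<delta> * indicator I y) \<le> integral\<^sup>L \<mu> (\<lambda>y. poly p y * poly p y)"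
      using le int[of "p * p"] I Ifin unfolding int_mult
      by (intro integral_mono) auto
    moreover have "integral\<^sup>L \<mu> (\<lambda>y. \<delta> * \<delta> * indicator I y) = \<delta> * \<delta> * measure \<mu> I"
      using sp by simp
    moreover have "measure \<mu> I > 0" unfolding measure_def using Ipos Ifin
      by (simp add: enn2real_positive_iff)
    ultimately show ?thesis unfolding ifn_mult using d0 by (smt (verit) mult_pos_pos)
  qed
  then show ?thesis unfolding pd_def using ifn_lin[OF int] by blast
qed



lemma am_sets: "sets (add_masses \<mu> S M) = sets \<mu>"
  unfolding add_masses_def using sets.space_closed[of \<mu>] by (simp add: sets.sigma_sets_eq)

lemma am_space: "space (add_masses \<mu> S M) = space \<mu>"
  unfolding add_masses_def using sets.space_closed[of \<mu>] by simp

lemma am_emeasure: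
  assumes B: "B \<in> sets \<mu>"
  shows "emeasure (add_masses \<mu> S M) B = emeasure \<mu> B + (\<Sum>a\<in>S. ennreal (M a) * indicator B a)"
  unfolding add_masses_def
proof (rule emeasure_measure_of_sigma[OF sets.sigma_algebra_axioms _ _ B])
  show "positive (sets \<mu>) (\<lambda>B. emeasure \<mu> B + (\<Sum>a\<in>S. ennreal (M a) * indicator B a))"
    unfolding positive_def by simp
  show "countably_additive (sets \<mu>) (\<lambda>B. emeasure \<mu> B + (\<Sum>a\<in>S. ennreal (M a) * indicator B a))"
    unfolding countably_additive_def
  proof safe
    fix A :: "nat \<Rightarrow> _" assume A: "range A \<subseteq> sets \<mu>" "disjoint_family A" "\<Union> (range A) \<in> sets \<mu>"
    have "(\<Sum>i. emeasure \<mu> (A i) + (\<Sum>a\<in>S. ennreal (M a) * indicator (A i) a))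
        = (\<Sum>i. emeasure \<mu> (A i)) + (\<Sum>i. \<Sum>a\<in>S. ennreal (M a) * indicator (A i) a)"
      by (rule suminf_add[symmetric]) auto
    also have "(\<Sum>i. emeasure \<mu> (A i)) = emeasure \<mu> (\<Union> (range A))"
      using suminf_emeasure[OF A(1,2)] by simp
    also have "(\<Sum>i. \<Sum>a\<in>S. ennreal (M a) * indicator (A i) a) = (\<Sum>a\<in>S. \<Sum>i. ennreal (M a) * indicator (A i) a)"
      by (rule suminf_sum) auto
    also have "\<dots> = (\<Sum>a\<in>S. ennreal (M a) * indicator (\<Union> (range A)) a)"
      using suminf_indicator[OF A(2)] by simp
    finally show "(\<Sum>i. emeasure \<mu> (A i) + (\<Sum>a\<in>S. ennreal (M a) * indicator (A i) a)) =
       emeasure \<mu> (\<Union> (range A)) + (\<Sum>a\<in>S. ennreal (M a) * indicator (\<Union> (range A)) a)" .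
  qed
qed

lemma am_meas: "borel_measurable (add_masses \<mu> S M) = borel_measurable \<mu>"
  by (rule measurable_cong_sets[OF am_sets refl])

lemma am_nn:
  assumes u: "u \<in> borel_measurable \<mu>" and sp: "space \<mu> = UNIV"
  shows "(\<integral>\<^sup>+x. u x \<partial>add_masses \<mu> S M) = (\<integral>\<^sup>+x. u x \<partial>\<mu>) + (\<Sum>a\<in>S. ennreal (M a) * u a)"
  using u
proof (induction rule: borel_measurable_induct)
  case (cong f g)
  then have "f = g" using sp by auto
  then show ?case using cong by simp
next
  case (set A)
  then show ?case using am_emeasure[OF set] am_sets[of \<mu> S M] by simp
next
  case (mult u c)
  have "(\<integral>\<^sup>+x. c * u x \<partial>add_masses \<mu> S M) = c * (\<integral>\<^sup>+x. u x \<partial>add_masses \<mu> S M)"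
    using mult(2) by (intro nn_integral_cmult) (simp add: am_meas)
  also have "\<dots> = c * (\<integral>\<^sup>+x. u x \<partial>\<mu>) + (\<Sum>a\<in>S. ennreal (M a) * (c * u a))"
    using mult(4) by (simp add: distrib_left sum_distrib_left mult_ac)
  also have "c * (\<integral>\<^sup>+x. u x \<partial>\<mu>) = (\<integral>\<^sup>+x. c * u x \<partial>\<mu>)"
    using mult(2) by (intro nn_integral_cmult[symmetric])
  finally show ?case .
next
  case (add u v)
  have "(\<integral>\<^sup>+x. v x + u x \<partial>add_masses \<mu> S M) = (\<integral>\<^sup>+x. v x \<partial>add_masses \<mu> S M) + (\<integral>\<^sup>+x. u x \<partial>add_masses \<mu> S M)"
    using add by (intro nn_integral_add) (simp_all add: am_meas)
  also have "\<dots> = ((\<integral>\<^sup>+x. v x \<partial>\<mu>) + (\<integral>\<^sup>+x. u x \<partial>\<mu>)) + (\<Sum>a\<in>S. ennreal (M a) * (v a + u a))"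
    using add by (simp add: distrib_left sum.distrib add_ac)
  also have "(\<integral>\<^sup>+x. v x \<partial>\<mu>) + (\<integral>\<^sup>+x. u x \<partial>\<mu>) = (\<integral>\<^sup>+x. v x + u x \<partial>\<mu>)"
    using add by (intro nn_integral_add[symmetric]) simp_all
  finally show ?case .
next
  case (seq U)
  have incI: "incseq (\<lambda>i. \<integral>\<^sup>+x. U i x \<partial>\<mu>)"
    using seq unfolding incseq_def le_fun_def by (auto intro!: nn_integral_mono)
  have incP: "incseq (\<lambda>i. ennreal (M a) * U i a)" for a
    using seq unfolding incseq_def le_fun_def by (auto intro!: mult_left_mono)
  have incS: "incseq (\<lambda>i. \<Sum>a\<in>S. ennreal (M a) * U i a)"
    using incP unfolding incseq_def by (auto intro!: sum_mono)
  have "(\<integral>\<^sup>+x. (SUP i. U i) x \<partial>add_masses \<mu> S M) = (\<integral>\<^sup>+x. (SUP i. U i x) \<partial>add_masses \<mu> S M)"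
    by (simp add: SUP_apply image_comp)
  also have "\<dots> = (SUP i. \<integral>\<^sup>+x. U i x \<partial>add_masses \<mu> S M)"
    using seq by (intro nn_integral_monotone_convergence_SUP) (simp_all add: am_meas)
  also have "\<dots> = (SUP i. (\<integral>\<^sup>+x. U i x \<partial>\<mu>) + (\<Sum>a\<in>S. ennreal (M a) * U i a))"
    using seq by simp
  also have "\<dots> = (SUP i. \<integral>\<^sup>+x. U i x \<partial>\<mu>) + (SUP i. \<Sum>a\<in>S. ennreal (M a) * U i a)"
    using incI incS by (rule ennreal_SUP_add)
  also have "(SUP i. \<integral>\<^sup>+x. U i x \<partial>\<mu>) = (\<integral>\<^sup>+x. (SUP i. U i x) \<partial>\<mu>)"
    using seq by (intro nn_integral_monotone_convergence_SUP[symmetric]) simp_all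
  also have "(SUP i. \<Sum>a\<in>S. ennreal (M a) * U i a) = (\<Sum>a\<in>S. SUP i. ennreal (M a) * U i a)"
    using incP by (intro ennreal_SUP_sum) simp
  also have "\<dots> = (\<Sum>a\<in>S. ennreal (M a) * (SUP i. U i a))"
    by (simp add: SUP_mult_left_ennreal)
  finally show ?case by (simp add: SUP_apply image_comp)
qed

lemma enn2real_ennreal_max: "enn2real (ennreal r) = max 0 r"
  by (cases "r \<ge> 0") (auto simp: ennreal_neg)

lemma am_masses_fin: "(\<Sum>a\<in>S. ennreal (M a) * ennreal (g a)) < top"
  by (cases "finite S") (simp_all add: ennreal_mult_less_top)

lemma am_masses_real:
  assumes "\<And>a. a \<in> S \<Longrightarrow> M a \<ge> 0"
  shows "enn2real (\<Sum>a\<in>S. ennreal (M a) * ennreal (g a)) = (\<Sum>a\<in>S. M a * max 0 (g a))"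
proof -
  have "enn2real (\<Sum>a\<in>S. ennreal (M a) * ennreal (g a)) = (\<Sum>a\<in>S. enn2real (ennreal (M a) * ennreal (g a)))"
    by (subst enn2real_sum) (auto simp: ennreal_mult_less_top)
  also have "\<dots> = (\<Sum>a\<in>S. M a * max 0 (g a))"
    using assms by (intro sum.cong) (auto simp: enn2real_mult enn2real_ennreal_max)
  finally show ?thesis .
qed

lemma am_int:
  fixes f :: "real \<Rightarrow> real"
  assumes f: "integrable \<mu> f" and sp: "space \<mu> = UNIV" and M: "\<And>a. a \<in> S \<Longrightarrow> M a \<ge> 0"
  shows "integrable (add_masses \<mu> S M) f"
    and "integral\<^sup>L (add_masses \<mu> S M) f = integral\<^sup>L \<mu> f + (\<Sum>a\<in>S. M a * f a)"
proof -
  have fm: "f \<in> borel_measurable \<mu>" using f by auto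
  have nn: "(\<integral>\<^sup>+x. ennreal (g x) \<partial>add_masses \<mu> S M) = (\<integral>\<^sup>+x. ennreal (g x) \<partial>\<mu>) + (\<Sum>a\<in>S. ennreal (M a) * ennreal (g a))"
    if "g \<in> borel_measurable \<mu>" for g :: "real \<Rightarrow> real"
    using am_nn[of "\<lambda>x. ennreal (g x)" \<mu> S M] that sp by simp
  have fin1: "(\<integral>\<^sup>+x. ennreal (norm (f x)) \<partial>\<mu>) < \<infinity>" using f unfolding integrable_iff_bounded by blast
  show int: "integrable (add_masses \<mu> S M) f"
    unfolding integrable_iff_bounded
  proof
    show "f \<in> borel_measurable (add_masses \<mu> S M)" using fm by (simp add: am_meas)
    have "(\<integral>\<^sup>+x. ennreal (norm (f x)) \<partial>add_masses \<mu> S M) = (\<integral>\<^sup>+x. ennreal (norm (f x)) \<partial>\<mu>) + (\<Sum>a\<in>S. ennreal (M a) * ennreal (norm (f a)))"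
      using nn[of "\<lambda>x. norm (f x)"] fm by simp
    also have "\<dots> < \<infinity>" using fin1 am_masses_fin[of M "\<lambda>a. norm (f a)" S] by simp
    finally show "(\<integral>\<^sup>+x. ennreal (norm (f x)) \<partial>add_masses \<mu> S M) < \<infinity>" .
  qed
  have fin2: "(\<integral>\<^sup>+x. ennreal (f x) \<partial>\<mu>) < \<infinity>" "(\<integral>\<^sup>+x. ennreal (- f x) \<partial>\<mu>) < \<infinity>"
  proof -
    have "(\<integral>\<^sup>+x. ennreal (f x) \<partial>\<mu>) \<le> (\<integral>\<^sup>+x. ennreal (norm (f x)) \<partial>\<mu>)"
      by (intro nn_integral_mono) (simp add: ennreal_leI)
    moreover have "(\<integral>\<^sup>+x. ennreal (- f x) \<partial>\<mu>) \<le> (\<integral>\<^sup>+x. ennreal (norm (f x)) \<partial>\<mu>)"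
      by (intro nn_integral_mono) (simp add: ennreal_leI)
    ultimately show "(\<integral>\<^sup>+x. ennreal (f x) \<partial>\<mu>) < \<infinity>" "(\<integral>\<^sup>+x. ennreal (- f x) \<partial>\<mu>) < \<infinity>"
      using fin1 by (auto intro: le_less_trans)
  qed
  have "integral\<^sup>L (add_masses \<mu> S M) f = enn2real (\<integral>\<^sup>+x. ennreal (f x) \<partial>add_masses \<mu> S M) - enn2real (\<integral>\<^sup>+x. ennreal (- f x) \<partial>add_masses \<mu> S M)"
    using int by (rule real_lebesgue_integral_def)
  also have "\<dots> = (enn2real (\<integral>\<^sup>+x. ennreal (f x) \<partial>\<mu>) + (\<Sum>a\<in>S. M a * max 0 (f a)))
      - (enn2real (\<integral>\<^sup>+x. ennreal (- f x) \<partial>\<mu>) + (\<Sum>a\<in>S. M a * max 0 (- f a)))"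
    using fm fin2 nn[of f] nn[of "\<lambda>x. - f x"] am_masses_fin[of M] am_masses_real[where S=S and M=M and g=f, OF M]
      am_masses_real[where S=S and M=M and g="\<lambda>x. - f x", OF M]
    by (simp add: enn2real_plus)
  also have "\<dots> = integral\<^sup>L \<mu> f + (\<Sum>a\<in>S. M a * f a)"
  proof -
    have "(\<Sum>a\<in>S. M a * max 0 (f a)) - (\<Sum>a\<in>S. M a * max 0 (- f a)) = (\<Sum>a\<in>S. M a * f a)"
    proof -
      have "max 0 (f a) - max 0 (- f a) = f a" for a by (simp add: max_def)
      then show ?thesis by (simp add: sum_subtractf[symmetric] right_diff_distrib[symmetric])
    qed
    then show ?thesis using real_lebesgue_integral_def[OF f] by simp
  qed
  finally show "integral\<^sup>L (add_masses \<mu> S M) f = integral\<^sup>L \<mu> f + (\<Sum>a\<in>S. M a * f a)" .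
qed



lemma mod_facts:
  fixes \<mu> :: "real measure"
  assumes sets_mu: "sets \<mu> = sets borel"
    and moments: "\<And>k::nat. integrable \<mu> (\<lambda>x. x ^ k)"
  shows "integrable (mod_measure \<mu> A) (\<lambda>x. poly p x)"
    and "ifn (mod_measure \<mu> A) p = modf (ifn \<mu>) A p"
proof -
  define \<pi> where "\<pi> = (\<Prod>a\<in>A. [:-a,1:]^2)"
  define g where "g x = (\<Prod>a\<in>A. (x - a)^2)" for x :: real
  have gp: "g = (\<lambda>x. poly \<pi> x)" unfolding g_def \<pi>_def by (simp add: fun_eq_iff poly_prod)
  have md: "mod_measure \<mu> A = density \<mu> (\<lambda>x. ennreal (g x))" unfolding mod_measure_def g_def ..
  have fm: "(\<lambda>x. poly p x) \<in> borel_measurable \<mu>" using poly_integrable[OF moments] by auto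
  have gm: "g \<in> borel_measurable \<mu>" unfolding gp using poly_integrable[OF moments] by auto
  have gn: "AE x in \<mu>. 0 \<le> g x" unfolding g_def by (simp add: prod_nonneg)
  have e: "(\<lambda>x. g x *\<^sub>R poly p x) = (\<lambda>x. poly (p * \<pi>) x)" unfolding gp by (simp add: fun_eq_iff)
  show "integrable (mod_measure \<mu> A) (\<lambda>x. poly p x)"
    unfolding md integrable_density[OF fm gm gn] e using poly_integrable[OF moments] .
  show "ifn (mod_measure \<mu> A) p = modf (ifn \<mu>) A p"
    unfolding ifn_def modf_def md integral_density[OF fm gm gn] e \<pi>_def ..
qed

theorem mainTheorem4:
  fixes \<mu> :: "real measure" and S :: "real set" and M :: "real \<Rightarrow> real" and n :: nat
  assumes sets_mu: "sets \<mu> = sets borel"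
    and incr: "infinite {x. point_of_increase \<mu> x}"
    and moments: "\<And>k::nat. integrable \<mu> (\<lambda>x. x ^ k)"
    and finS: "finite S" and nonempty: "S \<noteq> {}"
    and no_atoms: "\<And>a. a \<in> S \<Longrightarrow> emeasure \<mu> {a} = 0"
    and M_pos: "\<And>a. a \<in> S \<Longrightarrow> M a > 0"
  shows "\<exists>C :: real set \<Rightarrow> real.
           (\<forall>A \<in> Pow S. 0 < C A \<and> C A < 1) \<and>
           (\<Sum>A\<in>Pow S. C A) = 1 \<and>
           (\<forall>x y. kernel (add_masses \<mu> S M) (int n) x y =
              (\<Sum>A\<in>Pow S. C A * (\<Prod>a\<in>A. (x - a) * (y - a))
                  * kernel (mod_measure \<mu> A) (int n - int (card A)) x y))"
proof -
  have sp: "space \<mu> = UNIV" using sets_eq_imp_space_eq[OF sets_mu] by simp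
  define L where "L = ifn \<mu>"
  have pL: "pd L" unfolding L_def by (rule mu_pd[OF sets_mu incr moments])
  obtain C where Cpos: "\<forall>A\<in>Pow S. C A > 0" and Csum: "(\<Sum>A\<in>Pow S. C A) = 1"
    and Ck: "\<And>x y. poly (akp (addm L S M) (int n) x) y =
        (\<Sum>A\<in>Pow S. C A * (\<Prod>a\<in>A. (x - a) * (y - a)) * poly (akp (modf L A) (int n - int (card A)) x) y)"
    using abstract_main[OF finS pL, of M "int n"] M_pos by blast
  define \<nu> where "\<nu> = add_masses \<mu> S M"
  have M0: "\<And>a. a \<in> S \<Longrightarrow> M a \<ge> 0" using M_pos by (simp add: less_imp_le)
  have int\<nu>: "integrable \<nu> (\<lambda>x. poly p x)" for p
    unfolding \<nu>_def using am_int(1)[OF poly_integrable[OF moments] sp M0] .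
  have ifn\<nu>: "ifn \<nu> = addm L S M"
    unfolding \<nu>_def L_def addm_def ifn_def
    using am_int(2)[OF poly_integrable[OF moments] sp M0] by (simp add: fun_eq_iff)
  have pd\<nu>: "pd (ifn \<nu>)" unfolding ifn\<nu> using pd_addm[OF pL M0] .
  have k\<nu>: "kernel \<nu> m x y = poly (akp (addm L S M) m x) y" for m x y
    using bridge[OF int\<nu> pd\<nu>] unfolding ifn\<nu> .
  have kA: "kernel (mod_measure \<mu> A) m x y = poly (akp (modf L A) m x) y" if A: "A \<in> Pow S" for A m x y
  proof -
    have fA: "finite A" using A finS finite_subset by auto
    have e: "ifn (mod_measure \<mu> A) = modf L A"
      unfolding L_def using mod_facts(2)[OF sets_mu moments] by (simp add: fun_eq_iff)
    have pA: "pd (ifn (mod_measure \<mu> A))" unfolding e using pd_modf[OF pL fA] .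
    have "kernel (mod_measure \<mu> A) m x y = poly (akp (ifn (mod_measure \<mu> A)) m x) y"
      by (rule bridge[OF mod_facts(1)[OF sets_mu moments] pA])
    then show ?thesis by (simp add: e)
  qed
  have Clt: "C A < 1" if A: "A \<in> Pow S" for A
  proof -
    obtain B where B: "B \<in> Pow S" "B \<noteq> A"
      using nonempty by (cases "A = {}") auto
    have "1 = C A + (\<Sum>A'\<in>Pow S - {A}. C A')"
      using Csum A finS by (simp add: sum.remove)
    moreover have "(\<Sum>A'\<in>Pow S - {A}. C A') > 0"
      using B Cpos finS by (intro sum_pos) auto
    ultimately show ?thesis by linarith
  qed
  show ?thesis
  proof (intro exI[of _ C] conjI allI ballI)
    fix A assume "A \<in> Pow S" then show "0 < C A" "C A < 1" using Cpos Clt by auto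
  next
    show "(\<Sum>A\<in>Pow S. C A) = 1" by (rule Csum)
  next
    fix x y
    show "kernel (add_masses \<mu> S M) (int n) x y =
              (\<Sum>A\<in>Pow S. C A * (\<Prod>a\<in>A. (x - a) * (y - a))
                  * kernel (mod_measure \<mu> A) (int n - int (card A)) x y)"
      unfolding k\<nu>[unfolded \<nu>_def] Ck using kA by (intro sum.cong) auto
  qed
qed

end
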